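(* Let $\alpha\ge1$. Suppose valuations are arbitrary and the (non-separable) cost function $C:(2^M)^n\to\mathbb{R}_{\ge0}$ is non-decreasing, subadditive and $\alpha$-average min-bounded. Then the Sequential Mechanism satisfies IR, NPT and WGSP, is budget-balanced, and is $\alpha H_n$-approximate with respect to social cost. If moreover $C$ is $\alpha$-average max-bounded, then the Sequential Mechanism is $\alpha$-approximate.
   Context: Players $N=\{1,\dots,n\}$, items $M$. An allocation is $A=(A_1,\dots,A_n)$, $A_i\subseteq M$. For allocations, $S\cup T=(S_1\cup T_1,\dots,S_n\cup T_n)$ and $S\subseteq T$ means $S_i\subseteq T_i$ for all $i$. $C$ non-decreasing: $C(S)\le C(T)$ for $S\subseteq T$; subadditive: $C(S\cup T)\le C(S)+C(T)$. $A|_S$ gives $A_i$ to $i\in S$ and $\emptyset$ to others; $A|_i=A|_{\{i\}}$. $C$ is $\alpha$-average min-bounded (resp. max-bounded) if for every allocation $A$ and every $T\subseteq N$ with $|T|\ge2$, $\alpha\frac{C(A|_T)}{|T|}\ge\min_{i\in T}C(A|_i)$ (resp. $\ge\max_{i\in T}C(A|_i)$). A mechanism maps declared valuations $b$ to $A$ and payments $p$; utility $u_i=v_i(A_i)-p_i$ with true $v_i$. IR: $p_i\le b_i(A_i)$; NPT: $p_i\ge0$; WGSP: for every coalition $Q$, true $v_Q$, reports $v_{-Q}$ of others, there is no $b_Q$ with $u_i(b_Q,v_{-Q})>u_i(v_Q,v_{-Q})$ for all $i\in Q$. Budget-balanced: $\sum_ip_i=C(A)$. Social cost $\pi(A)=C(A)+\sum_i(v_i(M)-v_i(A_i))$;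 $\rho$-approximate: $\pi(A)\le\rho\min_{A'}\pi(A')$ for every truthfully reported profile. $H_n=\sum_{k=1}^n1/k$. Sequential Mechanism: fix an order $1,\dots,n$. For $i=1,\dots,n$: $p_i(S)=C(A_1,\dots,A_{i-1},S,\emptyset,\dots,\emptyset)-C(A_1,\dots,A_{i-1},\emptyset,\dots,\emptyset)$ and $A_i$ is the lexicographically smallest maximizer of $b_i(S)-p_i(S)$ over $S\subseteq M$. Output $A$ and $p_i=p_i(A_i)$. *)

theory Defs
  imports Complex_Main "HOL-Library.List_Lexorder"
begin

text \<open>Players are 1..n (type nat), items are a finite set M of a linearly ordered type.\<close>

definition is_alloc :: "nat \<Rightarrow> 'b set \<Rightarrow> (nat \<Rightarrow> 'b set) \<Rightarrow> bool" where
  "is_alloc n M A \<longleftrightarrow> (\<forall>i. A i \<subseteq> M) \<and> (\<forall>i. i \<notin> {1..n} \<longrightarrow> A i = {})"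

definition restr :: "(nat \<Rightarrow> 'b set) \<Rightarrow> nat set \<Rightarrow> nat \<Rightarrow> 'b set" where
  "restr A T = (\<lambda>i. if i \<in> T then A i else {})"

definition nondecreasing_cost :: "nat \<Rightarrow> 'b set \<Rightarrow> ((nat \<Rightarrow> 'b set) \<Rightarrow> real) \<Rightarrow> bool" where
  "nondecreasing_cost n M C \<longleftrightarrow> (\<forall>S T. is_alloc n M S \<longrightarrow> is_alloc n M T \<longrightarrow>
      (\<forall>i. S i \<subseteq> T i) \<longrightarrow> C S \<le> C T)"

definition subadditive_cost :: "nat \<Rightarrow> 'b set \<Rightarrow> ((nat \<Rightarrow> 'b set) \<Rightarrow> real) \<Rightarrow> bool" where
  "subadditive_cost n M C \<longleftrightarrow> (\<forall>S T. is_alloc n M S \<longrightarrow> is_alloc n M T \<longrightarrow>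
      C (\<lambda>i. S i \<union> T i) \<le> C S + C T)"

definition avg_min_bounded :: "real \<Rightarrow> nat \<Rightarrow> 'b set \<Rightarrow> ((nat \<Rightarrow> 'b set) \<Rightarrow> real) \<Rightarrow> bool" where
  "avg_min_bounded \<alpha> n M C \<longleftrightarrow> (\<forall>A T. is_alloc n M A \<longrightarrow> T \<subseteq> {1..n} \<longrightarrow> card T \<ge> 2 \<longrightarrow>
      \<alpha> * C (restr A T) / real (card T) \<ge> Min ((\<lambda>i. C (restr A {i})) ` T))"

definition avg_max_bounded :: "real \<Rightarrow> nat \<Rightarrow> 'b set \<Rightarrow> ((nat \<Rightarrow> 'b set) \<Rightarrow> real) \<Rightarrow> bool" where
  "avg_max_bounded \<alpha> n M C \<longleftrightarrow> (\<forall>A T. is_alloc n M A \<longrightarrow> T \<subseteq> {1..n} \<longrightarrow> card T \<ge> 2 \<longrightarrow>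
      \<alpha> * C (restr A T) / real (card T) \<ge> Max ((\<lambda>i. C (restr A {i})) ` T))"

definition valuation :: "'b set \<Rightarrow> ('b set \<Rightarrow> real) \<Rightarrow> bool" where
  "valuation M v \<longleftrightarrow> v {} = 0 \<and> (\<forall>S T. S \<subseteq> T \<longrightarrow> T \<subseteq> M \<longrightarrow> v S \<le> v T)"

definition profile :: "nat \<Rightarrow> 'b set \<Rightarrow> (nat \<Rightarrow> 'b set \<Rightarrow> real) \<Rightarrow> bool" where
  "profile n M b \<longleftrightarrow> (\<forall>i\<in>{1..n}. valuation M (b i))"

definition lex_less :: "'b::linorder set \<Rightarrow> 'b set \<Rightarrow> bool" where
  "lex_less S T \<longleftrightarrow> sorted_list_of_set S < sorted_list_of_set T"

definition lex_argmax :: "'b::linorder set \<Rightarrow> ('b set \<Rightarrow> real) \<Rightarrow> 'b set" where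
  "lex_argmax M f = (THE S. S \<subseteq> M \<and> (\<forall>T. T \<subseteq> M \<longrightarrow> f T \<le> f S) \<and>
      (\<forall>T. T \<subseteq> M \<longrightarrow> f T = f S \<longrightarrow> T \<noteq> S \<longrightarrow> lex_less S T))"

definition seq_price :: "((nat \<Rightarrow> 'b set) \<Rightarrow> real) \<Rightarrow> (nat \<Rightarrow> 'b set) \<Rightarrow> nat \<Rightarrow> 'b set \<Rightarrow> real" where
  "seq_price C P i S = C (P(i := S)) - C P"

primrec seq_pre :: "((nat \<Rightarrow> 'b::linorder set) \<Rightarrow> real) \<Rightarrow> 'b set \<Rightarrow> (nat \<Rightarrow> 'b set \<Rightarrow> real)
    \<Rightarrow> nat \<Rightarrow> nat \<Rightarrow> 'b set" where
  "seq_pre C M b 0 = (\<lambda>_. {})"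
| "seq_pre C M b (Suc k) = (seq_pre C M b k)(Suc k :=
      lex_argmax M (\<lambda>S. b (Suc k) S - seq_price C (seq_pre C M b k) (Suc k) S))"

definition seq_alloc :: "nat \<Rightarrow> ((nat \<Rightarrow> 'b::linorder set) \<Rightarrow> real) \<Rightarrow> 'b set
    \<Rightarrow> (nat \<Rightarrow> 'b set \<Rightarrow> real) \<Rightarrow> nat \<Rightarrow> 'b set" where
  "seq_alloc n C M b = seq_pre C M b n"

definition seq_pay :: "nat \<Rightarrow> ((nat \<Rightarrow> 'b::linorder set) \<Rightarrow> real) \<Rightarrow> 'b set
    \<Rightarrow> (nat \<Rightarrow> 'b set \<Rightarrow> real) \<Rightarrow> nat \<Rightarrow> real" where
  "seq_pay n C M b i = seq_price C (seq_pre C M b (i - 1)) i (seq_alloc n C M b i)"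

definition seq_util :: "nat \<Rightarrow> ((nat \<Rightarrow> 'b::linorder set) \<Rightarrow> real) \<Rightarrow> 'b set
    \<Rightarrow> (nat \<Rightarrow> 'b set \<Rightarrow> real) \<Rightarrow> (nat \<Rightarrow> 'b set \<Rightarrow> real) \<Rightarrow> nat \<Rightarrow> real" where
  "seq_util n C M v b i = v i (seq_alloc n C M b i) - seq_pay n C M b i"

definition seq_IR :: "nat \<Rightarrow> ((nat \<Rightarrow> 'b::linorder set) \<Rightarrow> real) \<Rightarrow> 'b set \<Rightarrow> bool" where
  "seq_IR n C M \<longleftrightarrow> (\<forall>b. profile n M b \<longrightarrow>
      (\<forall>i\<in>{1..n}. seq_pay n C M b i \<le> b i (seq_alloc n C M b i)))"

definition seq_NPT :: "nat \<Rightarrow> ((nat \<Rightarrow> 'b::linorder set) \<Rightarrow> real) \<Rightarrow> 'b set \<Rightarrow> bool" where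
  "seq_NPT n C M \<longleftrightarrow> (\<forall>b. profile n M b \<longrightarrow> (\<forall>i\<in>{1..n}. seq_pay n C M b i \<ge> 0))"

definition seq_WGSP :: "nat \<Rightarrow> ((nat \<Rightarrow> 'b::linorder set) \<Rightarrow> real) \<Rightarrow> 'b set \<Rightarrow> bool" where
  "seq_WGSP n C M \<longleftrightarrow> (\<forall>Q v b. Q \<subseteq> {1..n} \<longrightarrow> Q \<noteq> {} \<longrightarrow> profile n M v \<longrightarrow>
      (\<forall>i\<in>Q. valuation M (b i)) \<longrightarrow>
      \<not> (\<forall>i\<in>Q. seq_util n C M v (\<lambda>j. if j \<in> Q then b j else v j) i > seq_util n C M v v i))"

definition seq_budget_balanced :: "nat \<Rightarrow> ((nat \<Rightarrow> 'b::linorder set) \<Rightarrow> real) \<Rightarrow> 'b set \<Rightarrow> bool" where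
  "seq_budget_balanced n C M \<longleftrightarrow> (\<forall>b. profile n M b \<longrightarrow>
      (\<Sum>i=1..n. seq_pay n C M b i) = C (seq_alloc n C M b))"

definition social_cost :: "nat \<Rightarrow> ((nat \<Rightarrow> 'b set) \<Rightarrow> real) \<Rightarrow> 'b set
    \<Rightarrow> (nat \<Rightarrow> 'b set \<Rightarrow> real) \<Rightarrow> (nat \<Rightarrow> 'b set) \<Rightarrow> real" where
  "social_cost n C M v A = C A + (\<Sum>i=1..n. v i M - v i (A i))"

definition seq_approx :: "real \<Rightarrow> nat \<Rightarrow> ((nat \<Rightarrow> 'b::linorder set) \<Rightarrow> real) \<Rightarrow> 'b set \<Rightarrow> bool" where
  "seq_approx \<rho> n C M \<longleftrightarrow> (\<forall>v. profile n M v \<longrightarrow> (\<forall>A'. is_alloc n M A' \<longrightarrow>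
      social_cost n C M v (seq_alloc n C M v) \<le> \<rho> * social_cost n C M v A'))"

definition harmonic :: "nat \<Rightarrow> real" where
  "harmonic n = (\<Sum>k=1..n. 1 / real k)"

end

theory Submission
  imports Defs
begin

lemma lex_argmax_max:
  fixes M :: "'b::linorder set"
  assumes "finite M"
  shows "lex_argmax M f \<subseteq> M \<and> (\<forall>T. T \<subseteq> M \<longrightarrow> f T \<le> f (lex_argmax M f))"
proof -
  let ?P = "\<lambda>S. S \<subseteq> M \<and> (\<forall>T. T \<subseteq> M \<longrightarrow> f T \<le> f S) \<and>
      (\<forall>T. T \<subseteq> M \<longrightarrow> f T = f S \<longrightarrow> T \<noteq> S \<longrightarrow> lex_less S T)"
  have fin: "finite (Pow M)" using assms by simp
  have "Max (f ` Pow M) \<in> f ` Pow M" using fin by (intro Max_in) auto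
  then obtain S0 where S0: "S0 \<subseteq> M" "f S0 = Max (f ` Pow M)" by auto
  have S0max: "f T \<le> f S0" if "T \<subseteq> M" for T
  proof -
    have "f T \<in> f ` Pow M" using that by simp
    thus ?thesis using fin S0(2) by simp
  qed
  define Mx where "Mx = {S. S \<subseteq> M \<and> f S = f S0}"
  have "Mx \<subseteq> Pow M" unfolding Mx_def by blast
  hence finMx: "finite Mx" using fin by (rule finite_subset)
  have "S0 \<in> Mx" using S0 unfolding Mx_def by simp
  hence "sorted_list_of_set ` Mx \<noteq> {}" by blast
  hence "Min (sorted_list_of_set ` Mx) \<in> sorted_list_of_set ` Mx"
    using finMx by (intro Min_in) simp_all
  then obtain S1 where S1': "Min (sorted_list_of_set ` Mx) = sorted_list_of_set S1" "S1 \<in> Mx"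
    by (rule imageE)
  have S1: "S1 \<in> Mx" "sorted_list_of_set S1 = Min (sorted_list_of_set ` Mx)" using S1' by simp_all
  have S1M: "S1 \<subseteq> M" and fS1: "f S1 = f S0" using S1(1) unfolding Mx_def by simp_all
  have ex: "?P S1"
  proof (intro conjI allI impI)
    show "S1 \<subseteq> M" by (rule S1M)
  next
    fix T assume "T \<subseteq> M" thus "f T \<le> f S1" using S0max fS1 by simp
  next
    fix T assume T: "T \<subseteq> M" "f T = f S1" "T \<noteq> S1"
    hence "T \<in> Mx" using fS1 unfolding Mx_def by simp
    hence "sorted_list_of_set T \<in> sorted_list_of_set ` Mx" by (rule imageI)
    hence le: "sorted_list_of_set S1 \<le> sorted_list_of_set T" unfolding S1(2) using finMx
      by (intro Min_le) simp_all
    have fT: "finite T" "finite S1" using T(1) S1M assms by (simp_all add: finite_subset)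
    have "sorted_list_of_set S1 \<noteq> sorted_list_of_set T"
    proof
      assume "sorted_list_of_set S1 = sorted_list_of_set T"
      hence "set (sorted_list_of_set S1) = set (sorted_list_of_set T)" by simp
      hence "S1 = T" using fT by simp
      thus False using T(3) by simp
    qed
    hence "sorted_list_of_set S1 < sorted_list_of_set T" using le by (simp add: order_less_le)
    thus "lex_less S1 T" unfolding lex_less_def .
  qed
  have uniq: "S = S1" if PS: "?P S" for S
  proof (rule ccontr)
    assume ne: "S \<noteq> S1"
    have PS1: "S \<subseteq> M" and PS2: "\<forall>T. T \<subseteq> M \<longrightarrow> f T \<le> f S"
      and PS3: "\<forall>T. T \<subseteq> M \<longrightarrow> f T = f S \<longrightarrow> T \<noteq> S \<longrightarrow> lex_less S T"
      using PS by simp_all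
    have ex1: "\<forall>T. T \<subseteq> M \<longrightarrow> f T \<le> f S1"
      and ex3: "\<forall>T. T \<subseteq> M \<longrightarrow> f T = f S1 \<longrightarrow> T \<noteq> S1 \<longrightarrow> lex_less S1 T"
      using ex by simp_all
    have e1: "f S \<le> f S1" using ex1 PS1 by simp
    have e2: "f S1 \<le> f S" using PS2 S1M by simp
    have eq: "f S1 = f S" using e1 e2 by linarith
    have "lex_less S S1" using PS3[rule_format, OF S1M eq] ne by simp
    moreover have "lex_less S1 S" using ex3[rule_format, OF PS1 eq[symmetric]] ne by simp
    ultimately show False unfolding lex_less_def by simp
  qed
  have "?P (lex_argmax M f)" unfolding lex_argmax_def
    by (rule theI[of ?P S1, OF ex uniq])
  thus ?thesis by blast
qed

lemma pre_out: "k < i \<or> i = 0 \<Longrightarrow> seq_pre C M b k i = {}"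
proof (induction k)
  case 0 show ?case by simp
next
  case (Suc k)
  hence "i \<noteq> Suc k" by auto
  hence "seq_pre C M b (Suc k) i = seq_pre C M b k i" by simp
  also have "\<dots> = {}" using Suc by auto
  finally show ?case .
qed

lemma pre_stable: "i \<le> k \<Longrightarrow> seq_pre C M b k i = seq_pre C M b i i"
proof (induction k)
  case 0 thus ?case by simp
next
  case (Suc k)
  show ?case
  proof (cases "i = Suc k")
    case True thus ?thesis by simp
  next
    case False
    hence "i \<le> k" using Suc.prems by simp
    have "seq_pre C M b (Suc k) i = seq_pre C M b k i" using False by simp
    also have "\<dots> = seq_pre C M b i i" using Suc.IH \<open>i \<le> k\<close> by simp
    finally show ?thesis .
  qed
qed

lemma pre_sub: assumes "finite M" shows "seq_pre C M b k i \<subseteq> M"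
proof (induction k)
  case 0 show ?case by simp
next
  case (Suc k)
  show ?case
  proof (cases "i = Suc k")
    case True thus ?thesis using lex_argmax_max[OF assms] by simp
  next
    case False thus ?thesis using Suc by simp
  qed
qed

lemma pre_alloc: assumes "finite M" "k \<le> n" shows "is_alloc n M (seq_pre C M b k)"
  unfolding is_alloc_def
proof (intro conjI allI impI)
  fix i show "seq_pre C M b k i \<subseteq> M" by (rule pre_sub[OF assms(1)])
next
  fix i assume "i \<notin> {1..n}"
  hence "k < i \<or> i = 0" using assms(2) by auto
  thus "seq_pre C M b k i = {}" by (rule pre_out)
qed

lemma alloc_eq: "i \<in> {1..n} \<Longrightarrow> seq_alloc n C M b i = seq_pre C M b i i"
  unfolding seq_alloc_def by (rule pre_stable) simp

lemma pre_upd: "(seq_pre C M b k)(Suc k := seq_pre C M b (Suc k) (Suc k)) = seq_pre C M b (Suc k)"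
  by simp

declare seq_pre.simps(2)[simp del]

lemma pay_eq: assumes "i \<in> {1..n}"
  shows "seq_pay n C M b i = C (seq_pre C M b i) - C (seq_pre C M b (i-1))"
proof -
  obtain k where i: "i = Suc k" using assms by (cases i) auto
  show ?thesis using assms unfolding seq_pay_def seq_price_def i
    by (simp only: alloc_eq[OF assms[unfolded i]] pre_upd diff_Suc_1)
qed

lemma util_opt:
  assumes "finite M" "i \<in> {1..n}" "T \<subseteq> M"
  shows "b i T - seq_price C (seq_pre C M b (i-1)) i T \<le> b i (seq_alloc n C M b i) - seq_pay n C M b i"
proof -
  obtain k where i: "i = Suc k" using assms by (cases i) auto
  have "seq_alloc n C M b i = lex_argmax M (\<lambda>S. b i S - seq_price C (seq_pre C M b k) i S)"
    using alloc_eq[OF assms(2)] i by (simp add: seq_pre.simps)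
  moreover have "seq_pay n C M b i = seq_price C (seq_pre C M b k) i (seq_alloc n C M b i)"
    unfolding seq_pay_def i by simp
  moreover define f where "f = (\<lambda>S. b i S - seq_price C (seq_pre C M b k) i S)"
  moreover have "f T \<le> f (lex_argmax M f)" using lex_argmax_max[OF assms(1), of f] assms(3) by blast
  ultimately show ?thesis using i by simp
qed

lemma pre_i_empty: "i \<ge> 1 \<Longrightarrow> seq_pre C M b (i-1) i = {}"
  by (rule pre_out) auto

lemma IR: assumes "finite M" shows "seq_IR n C M"
  unfolding seq_IR_def
proof (intro allI impI ballI)
  fix b i assume pb: "profile n M b" and i: "i \<in> {1..n}"
  have "b i {} = 0" using pb i unfolding profile_def valuation_def by auto
  moreover have "seq_pre C M b (i-1) i = {}" using pre_i_empty[of i] i by auto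
  hence "(seq_pre C M b (i-1))(i := {}) = seq_pre C M b (i-1)"
    by (simp add: fun_upd_idem)
  ultimately have "b i {} - seq_price C (seq_pre C M b (i-1)) i {} = 0"
    unfolding seq_price_def by simp
  thus "seq_pay n C M b i \<le> b i (seq_alloc n C M b i)"
    using util_opt[OF assms i empty_subsetI, where b=b and C=C] by linarith
qed

lemma NPT: assumes "finite M" "nondecreasing_cost n M C" shows "seq_NPT n C M"
  unfolding seq_NPT_def
proof (intro allI impI ballI)
  fix b i assume i: "i \<in> {1..n}"
  obtain k where k: "i = Suc k" using i by (cases i) auto
  have a1: "is_alloc n M (seq_pre C M b k)" using pre_alloc[OF assms(1)] i k by auto
  have a2: "is_alloc n M (seq_pre C M b (Suc k))" using pre_alloc[OF assms(1), of "Suc k" n] i k by auto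
  have s: "\<forall>j. seq_pre C M b k j \<subseteq> seq_pre C M b (Suc k) j"
  proof
    fix j show "seq_pre C M b k j \<subseteq> seq_pre C M b (Suc k) j"
      by (cases "j = Suc k") (auto simp: pre_out seq_pre.simps)
  qed
  have "C (seq_pre C M b k) \<le> C (seq_pre C M b (Suc k))"
    using assms(2) a1 a2 s unfolding nondecreasing_cost_def by blast
  thus "seq_pay n C M b i \<ge> 0" using pay_eq[OF i, where C=C and b=b] k by simp
qed

lemma BB_aux: "k \<le> n \<Longrightarrow> C (\<lambda>_. {}) = 0 \<Longrightarrow> (\<Sum>i=1..k. seq_pay n C M b i) = C (seq_pre C M b k)"
proof (induction k)
  case 0 then show ?case by simp
next
  case (Suc k)
  have "seq_pay n C M b (Suc k) = C (seq_pre C M b (Suc k)) - C (seq_pre C M b k)"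
    using pay_eq[of "Suc k" n C M b] Suc.prems by simp
  then show ?case using Suc by simp
qed

lemma BB: assumes "C (\<lambda>_. {}) = 0" shows "seq_budget_balanced n C M"
  unfolding seq_budget_balanced_def seq_alloc_def
proof (intro allI impI)
  fix b show "(\<Sum>i=1..n. seq_pay n C M b i) = C (seq_pre C M b n)"
    by (rule BB_aux[of n n C M b, OF le_refl assms])
qed

lemma pre_agree: "(\<forall>j. 1 \<le> j \<and> j \<le> k \<longrightarrow> b j = b' j) \<Longrightarrow> seq_pre C M b k = seq_pre C M b' k"
proof (induction k)
  case 0 show ?case by simp
next
  case (Suc k)
  have "seq_pre C M b k = seq_pre C M b' k" using Suc by simp
  moreover have "b (Suc k) = b' (Suc k)" using Suc.prems by simp
  ultimately show ?case unfolding seq_pre.simps by simp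
qed

lemma WGSP: assumes "finite M" shows "seq_WGSP n C M"
  unfolding seq_WGSP_def
proof (intro allI impI notI)
  fix Q v b
  assume Q: "Q \<subseteq> {1..n}" "Q \<noteq> {}" and all: "\<forall>i\<in>Q. seq_util n C M v (\<lambda>j. if j \<in> Q then b j else v j) i > seq_util n C M v v i"
  define b' where "b' = (\<lambda>j. if j \<in> Q then b j else v j)"
  have finQ: "finite Q" using finite_subset[OF Q(1)] by simp
  define i where "i = Min Q"
  have iQ: "i \<in> Q" using finQ Q(2) unfolding i_def by simp
  hence i: "i \<in> {1..n}" using Q by auto
  have "\<forall>j. 1 \<le> j \<and> j \<le> i - 1 \<longrightarrow> b' j = v j"
  proof (intro allI impI)
    fix j assume "1 \<le> j \<and> j \<le> i - 1"
    hence "j < i" using i by auto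
    hence "j \<notin> Q" using finQ unfolding i_def by (meson Min_le leD)
    thus "b' j = v j" unfolding b'_def by simp
  qed
  hence eqp: "seq_pre C M b' (i-1) = seq_pre C M v (i-1)" by (rule pre_agree)
  have sub: "seq_alloc n C M b' i \<subseteq> M" unfolding seq_alloc_def using pre_sub[OF assms] .
  have "seq_util n C M v b' i = v i (seq_alloc n C M b' i) - seq_price C (seq_pre C M v (i-1)) i (seq_alloc n C M b' i)"
    unfolding seq_util_def seq_pay_def eqp by simp
  also have "\<dots> \<le> seq_util n C M v v i"
    unfolding seq_util_def by (rule util_opt[OF assms i sub])
  finally have "seq_util n C M v b' i \<le> seq_util n C M v v i" .
  moreover have "seq_util n C M v b' i > seq_util n C M v v i" using all iQ unfolding b'_def by blast
  ultimately show False by simp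
qed


lemma restr_alloc: "is_alloc n M A \<Longrightarrow> is_alloc n M (restr A T)"
  unfolding is_alloc_def restr_def by auto

lemma restr_le: "\<forall>i. restr A T i \<subseteq> A i"
  unfolding restr_def by auto

lemma restr_all: "is_alloc n M A \<Longrightarrow> restr A {1..n} = A"
  unfolding is_alloc_def restr_def by (rule ext) auto

lemma price_le:
  assumes "finite M" "i \<in> {1..n}" "is_alloc n M A'" "subadditive_cost n M C"
  shows "seq_price C (seq_pre C M b (i-1)) i (A' i) \<le> C (restr A' {i})"
proof -
  define P where "P = seq_pre C M b (i-1)"
  have Pi: "P i = {}" unfolding P_def by (rule pre_i_empty) (use assms(2) in simp)
  have eq: "P(i := A' i) = (\<lambda>j. P j \<union> restr A' {i} j)"
  proof
    fix j show "(P(i := A' i)) j = P j \<union> restr A' {i} j"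
      by (cases "j = i") (simp_all add: restr_def Pi)
  qed
  have aP: "is_alloc n M P" unfolding P_def by (rule pre_alloc[OF assms(1)]) (use assms(2) in auto)
  have "C (\<lambda>j. P j \<union> restr A' {i} j) \<le> C P + C (restr A' {i})"
    using assms(4) aP restr_alloc[OF assms(3)] unfolding subadditive_cost_def by blast
  thus ?thesis unfolding seq_price_def P_def[symmetric] eq by simp
qed

lemma main_bound:
  assumes "finite M" "C (\<lambda>_. {}) = 0" "subadditive_cost n M C" "is_alloc n M A'"
  shows "social_cost n C M v (seq_alloc n C M v)
     \<le> (\<Sum>i=1..n. C (restr A' {i})) + (\<Sum>i=1..n. v i M - v i (A' i))"
proof -
  let ?A = "seq_alloc n C M v"
  have bb: "C ?A = (\<Sum>i=1..n. seq_pay n C M v i)"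
    unfolding seq_alloc_def by (rule BB_aux[of n n C M v, OF le_refl assms(2), symmetric])
  have each: "seq_pay n C M v i + (v i M - v i (?A i)) \<le> C (restr A' {i}) + (v i M - v i (A' i))"
    if i: "i \<in> {1..n}" for i
  proof -
    have sub: "A' i \<subseteq> M" using assms(4) unfolding is_alloc_def by simp
    have u: "v i (A' i) - seq_price C (seq_pre C M v (i-1)) i (A' i) \<le> v i (?A i) - seq_pay n C M v i"
      by (rule util_opt[OF assms(1) i sub])
    have p: "seq_price C (seq_pre C M v (i-1)) i (A' i) \<le> C (restr A' {i})"
      by (rule price_le[OF assms(1) i assms(4) assms(3)])
    show ?thesis using u p by linarith
  qed
  have "social_cost n C M v ?A = (\<Sum>i=1..n. seq_pay n C M v i + (v i M - v i (?A i)))"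
    unfolding social_cost_def bb by (simp add: sum.distrib)
  also have "\<dots> \<le> (\<Sum>i=1..n. C (restr A' {i}) + (v i M - v i (A' i)))"
    by (rule sum_mono) (rule each)
  also have "\<dots> = (\<Sum>i=1..n. C (restr A' {i})) + (\<Sum>i=1..n. v i M - v i (A' i))"
    by (simp add: sum.distrib)
  finally show ?thesis .
qed

lemma approx_gen:
  assumes "finite M" "C (\<lambda>_. {}) = 0" "subadditive_cost n M C"
    and "\<forall>A. is_alloc n M A \<longrightarrow> C A \<ge> 0"
    and hc: "\<And>A'. is_alloc n M A' \<Longrightarrow> (\<Sum>i=1..n. C (restr A' {i})) \<le> \<rho> * C A'"
    and rho: "n \<ge> 1 \<Longrightarrow> \<rho> \<ge> 1"
  shows "seq_approx \<rho> n C M"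
  unfolding seq_approx_def
proof (intro allI impI)
  fix v A' assume pv: "profile n M v" and a: "is_alloc n M A'"
  define D where "D = (\<Sum>i=1..n. v i M - v i (A' i))"
  have Dnn: "D \<ge> 0" unfolding D_def
  proof (rule sum_nonneg)
    fix i assume i: "i \<in> {1..n}"
    have "valuation M (v i)" using pv i unfolding profile_def by simp
    moreover have "A' i \<subseteq> M" using a unfolding is_alloc_def by simp
    ultimately show "0 \<le> v i M - v i (A' i)" unfolding valuation_def by simp
  qed
  have sc: "social_cost n C M v (seq_alloc n C M v) \<le> \<rho> * C A' + D"
    using main_bound[OF assms(1-3) a, of v] hc[OF a] unfolding D_def by linarith
  have "D \<le> \<rho> * D"
  proof (cases "n = 0")
    case True thus ?thesis unfolding D_def by simp
  next
    case False
    hence "\<rho> \<ge> 1" using rho by simp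
    hence "1 * D \<le> \<rho> * D" using Dnn by (intro mult_right_mono) simp_all
    thus ?thesis by simp
  qed
  hence "\<rho> * C A' + D \<le> \<rho> * (C A' + D)" by (simp add: distrib_left)
  moreover have "social_cost n C M v A' = C A' + D" unfolding social_cost_def D_def by simp
  ultimately have "social_cost n C M v (seq_alloc n C M v) \<le> \<rho> * (C A' + D)"
    using sc by linarith
  thus "social_cost n C M v (seq_alloc n C M v) \<le> \<rho> * social_cost n C M v A'"
    unfolding \<open>social_cost n C M v A' = C A' + D\<close> .
qed

lemma harmonic_Suc: "harmonic (Suc k) = harmonic k + 1 / real (Suc k)"
  unfolding harmonic_def by simp

lemma harmonic_ge1: "n \<ge> 1 \<Longrightarrow> harmonic n \<ge> 1"
proof -
  assume n: "n \<ge> 1"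
  have "(\<lambda>k. 1 / real k) 1 \<le> (\<Sum>k=1..n. 1 / real k)"
    by (rule member_le_sum) (use n in simp_all)
  thus ?thesis unfolding harmonic_def by simp
qed

lemma harm_bound:
  assumes "\<alpha> \<ge> 1" "\<forall>A. is_alloc n M A \<longrightarrow> C A \<ge> 0" "nondecreasing_cost n M C"
    "avg_min_bounded \<alpha> n M C" "is_alloc n M A'"
  shows "T \<subseteq> {1..n} \<Longrightarrow> card T = k \<Longrightarrow> (\<Sum>i\<in>T. C (restr A' {i})) \<le> \<alpha> * C A' * harmonic k"
proof (induction k arbitrary: T)
  case 0
  have "finite T" using finite_subset[OF 0(1)] by simp
  hence "T = {}" using 0(2) by simp
  thus ?case unfolding harmonic_def by simp
next
  case (Suc k)
  define c where "c = (\<lambda>i. C (restr A' {i}))"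
  have finT: "finite T" using finite_subset[OF Suc.prems(1)] by simp
  have neT: "T \<noteq> {}" using Suc.prems(2) by auto
  have C'nn: "C A' \<ge> 0" using assms(2) assms(5) by simp
  have "Min (c ` T) \<in> c ` T" using finT neT by (intro Min_in) simp_all
  then obtain j where j: "Min (c ` T) = c j" "j \<in> T" by (rule imageE)
  have IH: "(\<Sum>i\<in>T - {j}. c i) \<le> \<alpha> * C A' * harmonic k"
    unfolding c_def by (rule Suc.IH) (use Suc.prems j(2) finT in auto)
  have split: "(\<Sum>i\<in>T. c i) = c j + (\<Sum>i\<in>T - {j}. c i)"
    by (rule sum.remove[OF finT j(2)])
  have nd: "\<And>S T. is_alloc n M S \<Longrightarrow> is_alloc n M T \<Longrightarrow> \<forall>i. S i \<subseteq> T i \<Longrightarrow> C S \<le> C T"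
    using assms(3) unfolding nondecreasing_cost_def by blast
  have mono: "C (restr A' S) \<le> C A'" for S
    by (rule nd[OF restr_alloc[OF assms(5)] assms(5) restr_le])
  have cj: "c j \<le> \<alpha> * C A' / real (Suc k)"
  proof (cases "k = 0")
    case True
    have "c j \<le> C A'" unfolding c_def by (rule mono)
    also have "C A' = 1 * C A'" by simp
    also have "\<dots> \<le> \<alpha> * C A'" using assms(1) C'nn by (intro mult_right_mono) simp_all
    finally show ?thesis using True by simp
  next
    case False
    hence "card T \<ge> 2" using Suc.prems(2) by simp
    have am: "\<And>A T. is_alloc n M A \<Longrightarrow> T \<subseteq> {1..n} \<Longrightarrow> card T \<ge> 2 \<Longrightarrow>
        \<alpha> * C (restr A T) / real (card T) \<ge> Min ((\<lambda>i. C (restr A {i})) ` T)"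
      using assms(4) unfolding avg_min_bounded_def by blast
    have "\<alpha> * C (restr A' T) / real (card T) \<ge> Min (c ` T)"
      unfolding c_def by (rule am[OF assms(5) Suc.prems(1) \<open>card T \<ge> 2\<close>])
    hence "c j \<le> \<alpha> * C (restr A' T) / real (Suc k)" using j(1) Suc.prems(2) by simp
    also have "\<dots> \<le> \<alpha> * C A' / real (Suc k)"
      using mono[of T] assms(1) by (intro divide_right_mono mult_left_mono) simp_all
    finally show ?thesis .
  qed
  have "(\<Sum>i\<in>T. c i) \<le> \<alpha> * C A' / real (Suc k) + \<alpha> * C A' * harmonic k"
    using split cj IH by linarith
  also have "\<dots> = \<alpha> * C A' * harmonic (Suc k)"
    unfolding harmonic_Suc by (simp add: distrib_left)
  finally show ?case unfolding c_def .
qed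

lemma max_bound:
  assumes "\<alpha> \<ge> 1" "\<forall>A. is_alloc n M A \<longrightarrow> C A \<ge> 0" "nondecreasing_cost n M C"
    "avg_max_bounded \<alpha> n M C" "is_alloc n M A'"
  shows "(\<Sum>i=1..n. C (restr A' {i})) \<le> \<alpha> * C A'"
proof -
  define c where "c = (\<lambda>i. C (restr A' {i}))"
  have C'nn: "C A' \<ge> 0" using assms(2) assms(5) by simp
  have nd: "\<And>S T. is_alloc n M S \<Longrightarrow> is_alloc n M T \<Longrightarrow> \<forall>i. S i \<subseteq> T i \<Longrightarrow> C S \<le> C T"
    using assms(3) unfolding nondecreasing_cost_def by blast
  have mono: "C (restr A' S) \<le> C A'" for S
    by (rule nd[OF restr_alloc[OF assms(5)] assms(5) restr_le])
  have aC: "C A' \<le> \<alpha> * C A'"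
  proof -
    have "1 * C A' \<le> \<alpha> * C A'" using assms(1) C'nn by (intro mult_right_mono) simp_all
    thus ?thesis by simp
  qed
  show ?thesis
  proof (cases "n \<ge> 2")
    case False
    hence "n = 0 \<or> n = 1" by auto
    thus ?thesis
    proof
      assume "n = 0" thus ?thesis using aC C'nn by simp
    next
      assume n1: "n = 1"
      have "c 1 \<le> C A'" unfolding c_def by (rule mono)
      thus ?thesis using n1 aC unfolding c_def by simp
    qed
  next
    case True
    have am: "\<And>A T. is_alloc n M A \<Longrightarrow> T \<subseteq> {1..n} \<Longrightarrow> card T \<ge> 2 \<Longrightarrow>
        \<alpha> * C (restr A T) / real (card T) \<ge> Max ((\<lambda>i. C (restr A {i})) ` T)"
      using assms(4) unfolding avg_max_bounded_def by blast
    have "\<alpha> * C (restr A' {1..n}) / real (card {1..n}) \<ge> Max (c ` {1..n})"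
      unfolding c_def by (rule am[OF assms(5)]) (use True in simp_all)
    hence mx: "Max (c ` {1..n}) \<le> \<alpha> * C A' / real n"
      using restr_all[OF assms(5)] by simp
    have "(\<Sum>i=1..n. c i) \<le> of_nat (card {1..n}) * (\<alpha> * C A' / real n)"
    proof (rule sum_bounded_above)
      fix i assume "i \<in> {1..n}"
      hence "c i \<le> Max (c ` {1..n})" by (intro Max_ge) simp_all
      thus "c i \<le> \<alpha> * C A' / real n" using mx by linarith
    qed
    also have "\<dots> = \<alpha> * C A'" using True by simp
    finally show ?thesis unfolding c_def .
  qed
qed

theorem mainTheorem17:
  fixes n :: nat and M :: "'b::linorder set" and C :: "(nat \<Rightarrow> 'b set) \<Rightarrow> real" and \<alpha> :: real
  assumes "finite M"
    and "\<alpha> \<ge> 1"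
    and "\<forall>A. is_alloc n M A \<longrightarrow> C A \<ge> 0"
    and "C (\<lambda>_. {}) = 0"
    and "nondecreasing_cost n M C"
    and "subadditive_cost n M C"
    and "avg_min_bounded \<alpha> n M C"
  shows "seq_IR n C M \<and> seq_NPT n C M \<and> seq_WGSP n C M \<and> seq_budget_balanced n C M
         \<and> seq_approx (\<alpha> * harmonic n) n C M
         \<and> (avg_max_bounded \<alpha> n M C \<longrightarrow> seq_approx \<alpha> n C M)"
proof (intro conjI impI)
  show "seq_IR n C M" by (rule IR[OF assms(1)])
  show "seq_NPT n C M" by (rule NPT[OF assms(1) assms(5)])
  show "seq_WGSP n C M" by (rule WGSP[OF assms(1)])
  show "seq_budget_balanced n C M" by (rule BB) (rule assms(4))
  show "seq_approx (\<alpha> * harmonic n) n C M"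
  proof (rule approx_gen[OF assms(1) assms(4) assms(6) assms(3)])
    fix A' assume a: "is_alloc n M A'"
    have "(\<Sum>i\<in>{1..n}. C (restr A' {i})) \<le> \<alpha> * C A' * harmonic (card {1..n})"
      by (rule harm_bound[OF assms(2) assms(3) assms(5) assms(7) a]) simp_all
    thus "(\<Sum>i=1..n. C (restr A' {i})) \<le> \<alpha> * harmonic n * C A'" by (simp add: ac_simps)
  next
    assume n: "n \<ge> 1"
    have h: "harmonic n \<ge> 1" by (rule harmonic_ge1[OF n])
    have "\<alpha> * 1 \<le> \<alpha> * harmonic n" using h assms(2) by (intro mult_left_mono) simp_all
    hence "\<alpha> \<le> \<alpha> * harmonic n" by (simp only: mult_1_right)
    thus "\<alpha> * harmonic n \<ge> 1" using assms(2) by linarith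
  qed
next
  assume mb: "avg_max_bounded \<alpha> n M C"
  show "seq_approx \<alpha> n C M"
  proof (rule approx_gen[OF assms(1) assms(4) assms(6) assms(3)])
    fix A' assume a: "is_alloc n M A'"
    show "(\<Sum>i=1..n. C (restr A' {i})) \<le> \<alpha> * C A'"
      by (rule max_bound[OF assms(2) assms(3) assms(5) mb a])
  next
    show "\<alpha> \<ge> 1" by (rule assms(2))
  qed
qed

end
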